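(* Suppose $\lim_{|x|\to\infty}\int_{x-a}^{x+a}q(t)\,dt=\infty$ for every $a\in(0,\infty)$. Then $$\lim_{|x|\to\infty}\int_{-\infty}^{\infty}\Big|\frac{\partial}{\partial x}G(x,t)\Big|\,dt=0.$$
   Context: Let $q:\mathbb R\to\mathbb R$ be measurable with $q\in L_1^{\mathrm{loc}}(\mathbb R)$ and $q(x)\ge1$ a.e. A principal fundamental system of solutions (PFSS) of $z''=q(x)z$ is a pair $u,v$ of solutions ($C^1$, derivative locally absolutely continuous, equation a.e.) such that for all $x$: $u>0$, $v>0$, $u'<0$, $v'>0$, $v'u-u'v=1$, $u(x)=v(x)\int_x^\infty v(t)^{-2}dt$, and $u,u'\to0$ as $x\to\infty$, $v,v'\to0$ as $x\to-\infty$, $v,v'\to\infty$ as $x\to\infty$, $u,|u'|\to\infty$ as $x\to-\infty$. Fix a PFSS $\{u,v\}$. The Green function is $G(x,t)=u(x)v(t)$ for $x\ge t$ and $G(x,t)=u(t)v(x)$ for $x\le t$. *)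

theory Defs
  imports "HOL-Analysis.Analysis"
begin

definition potential :: "(real \<Rightarrow> real) \<Rightarrow> bool" where
  "potential q \<longleftrightarrow> q \<in> borel_measurable lborel
     \<and> (\<forall>a b. set_integrable lborel {a..b} q)
     \<and> (AE x in lborel. 1 \<le> q x)"

text \<open>z is a solution of z'' = q z with derivative z': z is C^1 with derivative z',
  and z' is locally absolutely continuous with z'' = q z a.e., expressed as
  z'(x) = z'(0) + integral from 0 to x of q z.\<close>
definition is_solution :: "(real \<Rightarrow> real) \<Rightarrow> (real \<Rightarrow> real) \<Rightarrow> (real \<Rightarrow> real) \<Rightarrow> bool" where
  "is_solution q z z' \<longleftrightarrow>
     (\<forall>x. (z has_real_derivative z' x) (at x)) \<and> continuous_on UNIV z'
     \<and> (\<forall>a b. set_integrable lborel {a..b} (\<lambda>t. q t * z t))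
     \<and> (\<forall>x. z' x = z' 0 + (LBINT t=0..x. q t * z t))"

definition PFSS :: "(real \<Rightarrow> real) \<Rightarrow> (real \<Rightarrow> real) \<Rightarrow> (real \<Rightarrow> real)
     \<Rightarrow> (real \<Rightarrow> real) \<Rightarrow> (real \<Rightarrow> real) \<Rightarrow> bool" where
  "PFSS q u u' v v' \<longleftrightarrow>
     is_solution q u u' \<and> is_solution q v v'
     \<and> (\<forall>x. u x > 0 \<and> v x > 0 \<and> u' x < 0 \<and> v' x > 0)
     \<and> (\<forall>x. v' x * u x - u' x * v x = 1)
     \<and> (\<forall>x. set_integrable lborel {x..} (\<lambda>t. 1 / (v t)\<^sup>2)
            \<and> u x = v x * (LBINT t:{x..}. 1 / (v t)\<^sup>2))
     \<and> (u \<longlongrightarrow> 0) at_top \<and> (u' \<longlongrightarrow> 0) at_top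
     \<and> (v \<longlongrightarrow> 0) at_bot \<and> (v' \<longlongrightarrow> 0) at_bot
     \<and> filterlim v at_top at_top \<and> filterlim v' at_top at_top
     \<and> filterlim u at_top at_bot \<and> filterlim (\<lambda>x. \<bar>u' x\<bar>) at_top at_bot"

definition green :: "(real \<Rightarrow> real) \<Rightarrow> (real \<Rightarrow> real) \<Rightarrow> real \<Rightarrow> real \<Rightarrow> real" where
  "green u v x t = (if t \<le> x then u x * v t else u t * v x)"

end

theory Submission
  imports Defs "HOL-Analysis.Analysis"
begin


lemma sol_diff:
  assumes "is_solution q z z'" "s \<le> t"
  shows "z' t - z' s = (LBINT r:{s..t}. q r * z r)"
proof -
  have int: "\<And>a b. set_integrable lborel {a..b} (\<lambda>r. q r * z r)"
    using assms(1) unfolding is_solution_def by blast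
  have e: "\<And>x. z' x = z' 0 + (LBINT r=0..x. q r * z r)"
    using assms(1) unfolding is_solution_def by blast
  have ii: "interval_lebesgue_integrable lborel (min (ereal 0) (min (ereal s) (ereal t))) (max (ereal 0) (max (ereal s) (ereal t))) (\<lambda>r. q r * z r)"
    unfolding interval_lebesgue_integrable_def
    by (auto intro!: set_integrable_subset[OF int[of "min 0 (min s t)" "max 0 (max s t)"]] simp: einterval_iff min_def max_def split: if_splits)
  have "(LBINT r=ereal 0..ereal s. q r * z r) + (LBINT r=ereal s..ereal t. q r * z r) = (LBINT r=ereal 0..ereal t. q r * z r)"
    by (rule interval_integral_sum[OF ii])
  then have "z' t - z' s = (LBINT r=s..t. q r * z r)"
    using e[of t] e[of s] by (simp add: zero_ereal_def)
  then show ?thesis using interval_integral_Icc[OF assms(2)] by simp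
qed



lemma pot_facts:
  assumes "potential q"
  shows "AE r in lborel. 1 \<le> q r" "\<And>a b. set_integrable lborel {a..b} q"
  using assms unfolding potential_def by auto

lemma int_lower:
  assumes "potential q" "set_integrable lborel {s..t} (\<lambda>r. q r * z r)"
    "\<And>r. r \<in> {s..t} \<Longrightarrow> c \<le> z r" "0 \<le> c"
  shows "c * (LBINT r:{s..t}. q r) \<le> (LBINT r:{s..t}. q r * z r)"
proof -
  have "c * (LBINT r:{s..t}. q r) = (LBINT r:{s..t}. c * q r)"
    by (simp add: set_integral_mult_right)
  also have "\<dots> \<le> (LBINT r:{s..t}. q r * z r)"
  proof (rule set_integral_mono_AE)
    show "set_integrable lborel {s..t} (\<lambda>r. c * q r)"
      using pot_facts(2)[OF assms(1)] by simp
    show "set_integrable lborel {s..t} (\<lambda>r. q r * z r)" by fact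
    show "AE x\<in>{s..t} in lborel. c * q x \<le> q x * z x"
      using pot_facts(1)[OF assms(1)]
    proof eventually_elim
      case (elim x)
      then show ?case using assms(3)[of x] by (auto simp: mult.commute intro: mult_left_mono)
    qed
  qed
  finally show ?thesis .
qed

lemma int_le_q:
  assumes "potential q" "set_integrable lborel {s..t} (\<lambda>r. q r * z r)"
    "continuous_on UNIV z" "\<And>r. 0 \<le> z r"
  shows "(LBINT r:{s..t}. z r) \<le> (LBINT r:{s..t}. q r * z r)"
proof (rule set_integral_mono_AE)
  show "set_integrable lborel {s..t} z"
    by (rule borel_integrable_atLeastAtMost') (use assms(3) continuous_on_subset in blast)
  show "set_integrable lborel {s..t} (\<lambda>r. q r * z r)" by fact
  show "AE x\<in>{s..t} in lborel. z x \<le> q x * z x"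
    using pot_facts(1)[OF assms(1)]
  proof eventually_elim
    case (elim x)
    then show ?case using assms(4)[of x] mult_right_mono[of 1 "q x" "z x"] by auto
  qed
qed



lemma pf:
  assumes "PFSS q u u' v v'"
  shows "is_solution q u u'" "is_solution q v v'"
    "\<And>x. u x > 0" "\<And>x. v x > 0" "\<And>x. u' x < 0" "\<And>x. v' x > 0"
    "\<And>x. v' x * u x - u' x * v x = 1"
  using assms unfolding PFSS_def by blast+

lemma sol_facts:
  assumes "is_solution q z z'"
  shows "\<And>x. (z has_real_derivative z' x) (at x)" "continuous_on UNIV z"
    "\<And>a b. set_integrable lborel {a..b} (\<lambda>t. q t * z t)"
proof -
  show d: "\<And>x. (z has_real_derivative z' x) (at x)" "\<And>a b. set_integrable lborel {a..b} (\<lambda>t. q t * z t)"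
    using assms unfolding is_solution_def by blast+
  show "continuous_on UNIV z"
    by (meson DERIV_isCont continuous_at_imp_continuous_on d(1))
qed

lemma sol_deriv_mono:
  assumes "potential q" "is_solution q z z'" "\<And>x. z x > 0" "s \<le> t"
  shows "z' s \<le> z' t"
proof -
  have "0 * (LBINT r:{s..t}. q r) \<le> (LBINT r:{s..t}. q r * z r)"
    by (rule int_lower[OF assms(1) sol_facts(3)[OF assms(2)]]) (auto intro: less_imp_le assms(3))
  then show ?thesis using sol_diff[OF assms(2,4)] by simp
qed

lemma u_dec:
  assumes "PFSS q u u' v v'" "s \<le> t"
  shows "u t \<le> u s"
proof (cases "s = t")
  case False
  then have "s < t" using assms(2) by simp
  have "u s > u t"
    by (rule DERIV_neg_imp_decreasing[OF \<open>s < t\<close>])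
       (use sol_facts(1)[OF pf(1)[OF assms(1)]] pf(5)[OF assms(1)] in blast)
  then show ?thesis by simp
qed simp

lemma v_inc:
  assumes "PFSS q u u' v v'" "s \<le> t"
  shows "v s \<le> v t"
proof (cases "s = t")
  case False
  then have "s < t" using assms(2) by simp
  have "v s < v t"
    by (rule DERIV_pos_imp_increasing[OF \<open>s < t\<close>])
       (use sol_facts(1)[OF pf(2)[OF assms(1)]] pf(6)[OF assms(1)] in blast)
  then show ?thesis by simp
qed simp

lemma Pu:
  assumes "potential q" "PFSS q u u' v v'" "s \<le> t"
  shows "u t * (LBINT r:{s..t}. q r) \<le> - u' s"
proof -
  have "u t * (LBINT r:{s..t}. q r) \<le> (LBINT r:{s..t}. q r * u r)"
    by (rule int_lower[OF assms(1) sol_facts(3)[OF pf(1)[OF assms(2)]]])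
       (auto intro: u_dec[OF assms(2)] less_imp_le pf(3)[OF assms(2)])
  then show ?thesis using sol_diff[OF pf(1)[OF assms(2)] assms(3)] pf(5)[OF assms(2), of t] by simp
qed

lemma Pv:
  assumes "potential q" "PFSS q u u' v v'" "s \<le> t"
  shows "v s * (LBINT r:{s..t}. q r) \<le> v' t"
proof -
  have "v s * (LBINT r:{s..t}. q r) \<le> (LBINT r:{s..t}. q r * v r)"
    by (rule int_lower[OF assms(1) sol_facts(3)[OF pf(2)[OF assms(2)]]])
       (auto intro: v_inc[OF assms(2)] less_imp_le pf(4)[OF assms(2)])
  then show ?thesis using sol_diff[OF pf(2)[OF assms(2)] assms(3)] pf(6)[OF assms(2), of s] by simp
qed

lemma MVTu:
  assumes "potential q" "PFSS q u u' v v'" "a > 0"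
  shows "a * (- u' (x + a)) \<le> u x"
proof -
  have "x < x + a" using assms(3) by simp
  from MVT2[OF this, of u u'] sol_facts(1)[OF pf(1)[OF assms(2)]]
  obtain z where z: "x < z" "z < x + a" "u (x + a) - u x = (x + a - x) * u' z" by blast
  have "u' z \<le> u' (x + a)"
    by (rule sol_deriv_mono[OF assms(1) pf(1)[OF assms(2)] pf(3)[OF assms(2)]]) (use z in simp)
  then have "a * (- u' (x + a)) \<le> a * (- u' z)" using assms(3) by simp
  also have "\<dots> = u x - u (x + a)" using z(3) by simp
  also have "\<dots> \<le> u x" using pf(3)[OF assms(2), of "x + a"] by simp
  finally show ?thesis .
qed

lemma MVTv:
  assumes "potential q" "PFSS q u u' v v'" "a > 0"
  shows "a * v' (x - a) \<le> v x"
proof -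
  have "x - a < x" using assms(3) by simp
  from MVT2[OF this, of v v'] sol_facts(1)[OF pf(2)[OF assms(2)]]
  obtain z where z: "x - a < z" "z < x" "v x - v (x - a) = (x - (x - a)) * v' z" by blast
  have "v' (x - a) \<le> v' z"
    by (rule sol_deriv_mono[OF assms(1) pf(2)[OF assms(2)] pf(4)[OF assms(2)]]) (use z in simp)
  then have "a * v' (x - a) \<le> a * v' z" using assms(3) by simp
  also have "\<dots> = v x - v (x - a)" using z(3) by simp
  also have "\<dots> \<le> v x" using pf(4)[OF assms(2), of "x - a"] by simp
  finally show ?thesis .
qed



lemma nn_set_int:
  fixes z :: "real \<Rightarrow> real" and c d :: real
  assumes "continuous_on UNIV z" "\<And>r. 0 \<le> z r"
  shows "(\<integral>\<^sup>+ t. ennreal (z t) * indicator {c..d} t \<partial>lborel) = ennreal (LBINT r:{c..d}. z r)"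
proof -
  have si: "set_integrable lborel {c..d} z"
    by (rule borel_integrable_atLeastAtMost') (use assms(1) continuous_on_subset in blast)
  have "(\<integral>\<^sup>+ t. ennreal (z t) * indicator {c..d} t \<partial>lborel) = (\<integral>\<^sup>+ t. ennreal (indicator {c..d} t * z t) \<partial>lborel)"
    by (rule nn_integral_cong) (simp split: split_indicator)
  also have "\<dots> = ennreal (integral\<^sup>L lborel (\<lambda>t. indicator {c..d} t * z t))"
    by (rule nn_integral_eq_integral) (use si assms(2) in \<open>auto simp: set_integrable_def\<close>)
  also have "\<dots> = ennreal (LBINT r:{c..d}. z r)"
    by (simp add: set_lebesgue_integral_def)
  finally show ?thesis .
qed

lemma tail_u:
  assumes "potential q" "PFSS q u u' v v'"
  shows "(\<integral>\<^sup>+ t. ennreal (u t) * indicator {c..} t \<partial>lborel) \<le> ennreal (- u' c)"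
proof -
  note cu = sol_facts(2)[OF pf(1)[OF assms(2)]]
  have um: "u \<in> borel_measurable lborel"
    using borel_measurable_continuous_onI[OF cu] by simp
  define f where "f n t = ennreal (u t) * indicator {c..c + real n} t" for n t
  have inc: "incseq f"
    unfolding f_def incseq_def le_fun_def
    by (auto intro!: mult_left_mono simp: indicator_def)
  have meas: "\<And>n. f n \<in> borel_measurable lborel"
    unfolding f_def using um by measurable
  have lim: "(\<lambda>n. f n t) \<longlonglongrightarrow> ennreal (u t) * indicator {c..} t" for t
  proof (rule tendsto_eventually)
    obtain N :: nat where N: "t - c \<le> real N" using real_arch_simple by blast
    show "\<forall>\<^sub>F n in sequentially. f n t = ennreal (u t) * indicator {c..} t"
      unfolding eventually_sequentially f_def
      using N by (intro exI[of _ N]) (auto simp: indicator_def)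
  qed
  have L: "(\<lambda>n. integral\<^sup>N lborel (f n)) \<longlonglongrightarrow> (\<integral>\<^sup>+ t. ennreal (u t) * indicator {c..} t \<partial>lborel)"
    by (rule nn_integral_LIMSEQ[OF inc meas lim])
  have B: "integral\<^sup>N lborel (f n) \<le> ennreal (- u' c)" for n
  proof -
    have "integral\<^sup>N lborel (f n) = ennreal (LBINT r:{c..c + real n}. u r)"
      unfolding f_def by (rule nn_set_int[OF cu]) (use pf(3)[OF assms(2)] less_imp_le in blast)
    also have "\<dots> \<le> ennreal (LBINT r:{c..c + real n}. q r * u r)"
      by (intro ennreal_leI int_le_q[OF assms(1) sol_facts(3)[OF pf(1)[OF assms(2)]] cu])
         (use pf(3)[OF assms(2)] less_imp_le in blast)
    also have "\<dots> = ennreal (u' (c + real n) - u' c)"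
      using sol_diff[OF pf(1)[OF assms(2)], of c "c + real n"] by simp
    also have "\<dots> \<le> ennreal (- u' c)"
      using pf(5)[OF assms(2), of "c + real n"] by (intro ennreal_leI) simp
    finally show ?thesis .
  qed
  show ?thesis by (rule LIMSEQ_le_const2[OF L]) (use B in blast)
qed

lemma tail_v:
  assumes "potential q" "PFSS q u u' v v'"
  shows "(\<integral>\<^sup>+ t. ennreal (v t) * indicator {..c} t \<partial>lborel) \<le> ennreal (v' c)"
proof -
  note cv = sol_facts(2)[OF pf(2)[OF assms(2)]]
  have vm: "v \<in> borel_measurable lborel"
    using borel_measurable_continuous_onI[OF cv] by simp
  define f where "f n t = ennreal (v t) * indicator {c - real n..c} t" for n t
  have inc: "incseq f"
    unfolding f_def incseq_def le_fun_def
    by (auto intro!: mult_left_mono simp: indicator_def)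
  have meas: "\<And>n. f n \<in> borel_measurable lborel"
    unfolding f_def using vm by measurable
  have lim: "(\<lambda>n. f n t) \<longlonglongrightarrow> ennreal (v t) * indicator {..c} t" for t
  proof (rule tendsto_eventually)
    obtain N :: nat where N: "c - t \<le> real N" using real_arch_simple by blast
    show "\<forall>\<^sub>F n in sequentially. f n t = ennreal (v t) * indicator {..c} t"
      unfolding eventually_sequentially f_def
      using N by (intro exI[of _ N]) (auto simp: indicator_def)
  qed
  have L: "(\<lambda>n. integral\<^sup>N lborel (f n)) \<longlonglongrightarrow> (\<integral>\<^sup>+ t. ennreal (v t) * indicator {..c} t \<partial>lborel)"
    by (rule nn_integral_LIMSEQ[OF inc meas lim])
  have B: "integral\<^sup>N lborel (f n) \<le> ennreal (v' c)" for n
  proof -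
    have "integral\<^sup>N lborel (f n) = ennreal (LBINT r:{c - real n..c}. v r)"
      unfolding f_def by (rule nn_set_int[OF cv]) (use pf(4)[OF assms(2)] less_imp_le in blast)
    also have "\<dots> \<le> ennreal (LBINT r:{c - real n..c}. q r * v r)"
      by (intro ennreal_leI int_le_q[OF assms(1) sol_facts(3)[OF pf(2)[OF assms(2)]] cv])
         (use pf(4)[OF assms(2)] less_imp_le in blast)
    also have "\<dots> = ennreal (v' c - v' (c - real n))"
      using sol_diff[OF pf(2)[OF assms(2)], of "c - real n" c] by simp
    also have "\<dots> \<le> ennreal (v' c)"
      using pf(6)[OF assms(2), of "c - real n"] by (intro ennreal_leI) simp
    finally show ?thesis .
  qed
  show ?thesis by (rule LIMSEQ_le_const2[OF L]) (use B in blast)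
qed



lemma deriv_green_lt:
  assumes "PFSS q u u' v v'" "t < x"
  shows "deriv (\<lambda>y. green u v y t) x = u' x * v t"
proof -
  have "((\<lambda>y. u y * v t) has_real_derivative u' x * v t) (at x)"
    using sol_facts(1)[OF pf(1)[OF assms(1)]] by (auto intro!: derivative_eq_intros)
  then have "((\<lambda>y. green u v y t) has_real_derivative u' x * v t) (at x)"
    by (rule has_field_derivative_transform_within_open[where S="{t<..}"])
       (use assms(2) in \<open>auto simp: green_def\<close>)
  then show ?thesis by (rule DERIV_imp_deriv)
qed

lemma deriv_green_gt:
  assumes "PFSS q u u' v v'" "x < t"
  shows "deriv (\<lambda>y. green u v y t) x = u t * v' x"
proof -
  have "((\<lambda>y. u t * v y) has_real_derivative u t * v' x) (at x)"
    using sol_facts(1)[OF pf(2)[OF assms(1)]] by (auto intro!: derivative_eq_intros)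
  then have "((\<lambda>y. green u v y t) has_real_derivative u t * v' x) (at x)"
    by (rule has_field_derivative_transform_within_open[where S="{..<t}"])
       (use assms(2) in \<open>auto simp: green_def\<close>)
  then show ?thesis by (rule DERIV_imp_deriv)
qed

lemma split_bound:
  assumes "PFSS q u u' v v'"
  shows "(\<integral>\<^sup>+ t. ennreal \<bar>deriv (\<lambda>y. green u v y t) x\<bar> \<partial>lborel) \<le>
    ennreal (- u' x) * (\<integral>\<^sup>+ t. ennreal (v t) * indicator {..x} t \<partial>lborel) +
    ennreal (v' x) * (\<integral>\<^sup>+ t. ennreal (u t) * indicator {x..} t \<partial>lborel)"
proof -
  have um: "u \<in> borel_measurable lborel"
    using borel_measurable_continuous_onI[OF sol_facts(2)[OF pf(1)[OF assms]]] by simp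
  have vm: "v \<in> borel_measurable lborel"
    using borel_measurable_continuous_onI[OF sol_facts(2)[OF pf(2)[OF assms]]] by simp
  have "(\<integral>\<^sup>+ t. ennreal \<bar>deriv (\<lambda>y. green u v y t) x\<bar> \<partial>lborel) \<le>
     (\<integral>\<^sup>+ t. ennreal (- u' x) * (ennreal (v t) * indicator {..x} t) +
        ennreal (v' x) * (ennreal (u t) * indicator {x..} t) \<partial>lborel)"
  proof (rule nn_integral_mono_AE)
    show "AE t in lborel. ennreal \<bar>deriv (\<lambda>y. green u v y t) x\<bar> \<le>
       ennreal (- u' x) * (ennreal (v t) * indicator {..x} t) +
        ennreal (v' x) * (ennreal (u t) * indicator {x..} t)"
      using AE_lborel_singleton[of x]
    proof eventually_elim
      case (elim t)
      show ?case
      proof (cases "t < x")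
        case True
        have "\<bar>deriv (\<lambda>y. green u v y t) x\<bar> = (- u' x) * v t"
          using deriv_green_lt[OF assms True] pf(4)[OF assms, of t] pf(5)[OF assms, of x]
          by (simp add: abs_mult)
        moreover have "ennreal (- u' x) * ennreal (v t) = ennreal (- u' x * v t)"
          by (rule ennreal_mult[symmetric]) (use pf(4)[OF assms, of t] pf(5)[OF assms, of x] in auto)
        ultimately show ?thesis using True by (simp add: indicator_def)
      next
        case False
        then have "x < t" using elim by simp
        have "\<bar>deriv (\<lambda>y. green u v y t) x\<bar> = u t * v' x"
          using deriv_green_gt[OF assms \<open>x < t\<close>] pf(3)[OF assms, of t] pf(6)[OF assms, of x]
          by (simp add: abs_mult)
        moreover have "ennreal (v' x) * ennreal (u t) = ennreal (u t * v' x)"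
          by (subst ennreal_mult[symmetric]) (use pf(3)[OF assms, of t] pf(6)[OF assms, of x] in \<open>auto simp: mult.commute\<close>)
        ultimately show ?thesis using \<open>x < t\<close> by (simp add: indicator_def)
      qed
    qed
  qed
  also have "\<dots> = ennreal (- u' x) * (\<integral>\<^sup>+ t. ennreal (v t) * indicator {..x} t \<partial>lborel) +
    ennreal (v' x) * (\<integral>\<^sup>+ t. ennreal (u t) * indicator {x..} t \<partial>lborel)"
    using um vm by (simp add: nn_integral_add nn_integral_cmult)
  finally show ?thesis .
qed

lemma u_part:
  assumes "potential q" "PFSS q u u' v v'" "a > 0"
  shows "(\<integral>\<^sup>+ t. ennreal (u t) * indicator {x..} t \<partial>lborel) \<le> ennreal (3 * a * u x - u' (x + 3 * a))"
proof -
  have um: "u \<in> borel_measurable lborel"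
    using borel_measurable_continuous_onI[OF sol_facts(2)[OF pf(1)[OF assms(2)]]] by simp
  have "(\<integral>\<^sup>+ t. ennreal (u t) * indicator {x..} t \<partial>lborel) \<le>
     (\<integral>\<^sup>+ t. ennreal (u x) * indicator {x..x + 3 * a} t + ennreal (u t) * indicator {x + 3 * a..} t \<partial>lborel)"
    by (rule nn_integral_mono) (auto simp: indicator_def intro!: ennreal_leI u_dec[OF assms(2)])
  also have "\<dots> = ennreal (u x) * emeasure lborel {x..x + 3 * a} + (\<integral>\<^sup>+ t. ennreal (u t) * indicator {x + 3 * a..} t \<partial>lborel)"
    using um by (simp add: nn_integral_add nn_integral_cmult_indicator)
  also have "\<dots> \<le> ennreal (u x) * ennreal (3 * a) + ennreal (- u' (x + 3 * a))"
    using assms(3) tail_u[OF assms(1,2), of "x + 3 * a"] by (intro add_mono) auto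
  also have "\<dots> = ennreal (3 * a * u x - u' (x + 3 * a))"
  proof -
    have p: "0 \<le> u x" "0 \<le> - u' (x + 3 * a)" "0 \<le> 3 * a"
      using assms(3) pf(3)[OF assms(2), of x] pf(5)[OF assms(2), of "x + 3 * a"] by auto
    have "ennreal (u x) * ennreal (3 * a) = ennreal (u x * (3 * a))"
      using p by (simp add: ennreal_mult)
    moreover have "ennreal (u x * (3 * a)) + ennreal (- u' (x + 3 * a)) = ennreal (u x * (3 * a) + - u' (x + 3 * a))"
      using p by (intro ennreal_plus[symmetric] mult_nonneg_nonneg) auto
    moreover have "u x * (3 * a) + - u' (x + 3 * a) = 3 * a * u x - u' (x + 3 * a)"
      by (simp add: algebra_simps)
    ultimately show ?thesis by metis
  qed
  finally show ?thesis .
qed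

lemma v_part:
  assumes "potential q" "PFSS q u u' v v'" "a > 0"
  shows "(\<integral>\<^sup>+ t. ennreal (v t) * indicator {..x} t \<partial>lborel) \<le> ennreal (3 * a * v x + v' (x - 3 * a))"
proof -
  have vm: "v \<in> borel_measurable lborel"
    using borel_measurable_continuous_onI[OF sol_facts(2)[OF pf(2)[OF assms(2)]]] by simp
  have "(\<integral>\<^sup>+ t. ennreal (v t) * indicator {..x} t \<partial>lborel) \<le>
     (\<integral>\<^sup>+ t. ennreal (v x) * indicator {x - 3 * a..x} t + ennreal (v t) * indicator {..x - 3 * a} t \<partial>lborel)"
    by (rule nn_integral_mono) (auto simp: indicator_def intro!: ennreal_leI v_inc[OF assms(2)])
  also have "\<dots> = ennreal (v x) * emeasure lborel {x - 3 * a..x} + (\<integral>\<^sup>+ t. ennreal (v t) * indicator {..x - 3 * a} t \<partial>lborel)"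
    using vm by (simp add: nn_integral_add nn_integral_cmult_indicator)
  also have "\<dots> \<le> ennreal (v x) * ennreal (3 * a) + ennreal (v' (x - 3 * a))"
    using assms(3) tail_v[OF assms(1,2), of "x - 3 * a"] by (intro add_mono) auto
  also have "\<dots> = ennreal (3 * a * v x + v' (x - 3 * a))"
  proof -
    have p: "0 \<le> v x" "0 \<le> v' (x - 3 * a)" "0 \<le> 3 * a"
      using assms(3) pf(4)[OF assms(2), of x] pf(6)[OF assms(2), of "x - 3 * a"] by auto
    have "ennreal (v x) * ennreal (3 * a) = ennreal (v x * (3 * a))"
      using p by (simp add: ennreal_mult)
    moreover have "ennreal (v x * (3 * a)) + ennreal (v' (x - 3 * a)) = ennreal (v x * (3 * a) + v' (x - 3 * a))"
      using p by simp
    moreover have "v x * (3 * a) + v' (x - 3 * a) = 3 * a * v x + v' (x - 3 * a)"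
      by (simp add: algebra_simps)
    ultimately show ?thesis by metis
  qed
  finally show ?thesis .
qed



lemma chain_u:
  assumes "potential q" "PFSS q u u' v v'" "a > 0" "K > 0" "K \<le> (LBINT r:{x + a..x + 2 * a}. q r)"
  shows "v' x * (- u' (x + 3 * a)) \<le> 1 / (a\<^sup>2 * K)"
proof -
  define Mu where "Mu = (LBINT r:{x + a..x + 2 * a}. q r)"
  define y where "y = - u' (x + 3 * a)"
  have y0: "0 \<le> y" using pf(5)[OF assms(2), of "x + 3 * a"] by (simp add: y_def)
  have h1: "u (x + 2 * a) * Mu \<le> - u' (x + a)"
    unfolding Mu_def using Pu[OF assms(1,2), of "x + a" "x + 2 * a"] assms(3) by simp
  have h2: "a * (- u' (x + a)) \<le> u x" by (rule MVTu[OF assms(1,2,3)])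
  have h3: "a * y \<le> u (x + 2 * a)"
    using MVTu[OF assms(1,2,3), of "x + 2 * a"] by (simp add: y_def algebra_simps)
  have M0: "K \<le> Mu" using assms(5) by (simp add: Mu_def)
  have "a\<^sup>2 * K * y \<le> a * Mu * (a * y)"
  proof -
    have "K * (a * (a * y)) \<le> Mu * (a * (a * y))"
      by (rule mult_right_mono[OF M0]) (use assms(3) y0 in simp)
    then show ?thesis by (simp add: power2_eq_square algebra_simps)
  qed
  also have "\<dots> \<le> a * Mu * u (x + 2 * a)"
    by (rule mult_left_mono[OF h3]) (use assms(3,4) M0 in simp)
  also have "\<dots> = a * (u (x + 2 * a) * Mu)" by simp
  also have "\<dots> \<le> a * (- u' (x + a))"
    by (rule mult_left_mono[OF h1]) (use assms(3) in simp)
  also have "\<dots> \<le> u x" by (rule h2)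
  finally have c: "a\<^sup>2 * K * y \<le> u x" .
  have w: "v' x * u x \<le> 1"
    using pf(7)[OF assms(2), of x] mult_neg_pos[OF pf(5)[OF assms(2), of x] pf(4)[OF assms(2), of x]] by (simp add: algebra_simps)
  have "a\<^sup>2 * K * (v' x * y) = v' x * (a\<^sup>2 * K * y)" by simp
  also have "\<dots> \<le> v' x * u x"
    by (rule mult_left_mono[OF c]) (use pf(6)[OF assms(2), of x] in simp)
  also have "\<dots> \<le> 1" by (rule w)
  finally have "a\<^sup>2 * K * (v' x * y) \<le> 1" .
  moreover have "0 < a\<^sup>2 * K" using assms(3,4) by simp
  ultimately show ?thesis unfolding y_def by (simp add: pos_le_divide_eq mult.commute)
qed

lemma chain_v:
  assumes "potential q" "PFSS q u u' v v'" "a > 0" "K > 0" "K \<le> (LBINT r:{x - 2 * a..x - a}. q r)"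
  shows "(- u' x) * v' (x - 3 * a) \<le> 1 / (a\<^sup>2 * K)"
proof -
  define Mv where "Mv = (LBINT r:{x - 2 * a..x - a}. q r)"
  define y where "y = v' (x - 3 * a)"
  have y0: "0 \<le> y" using pf(6)[OF assms(2), of "x - 3 * a"] by (simp add: y_def)
  have h1: "v (x - 2 * a) * Mv \<le> v' (x - a)"
    unfolding Mv_def using Pv[OF assms(1,2), of "x - 2 * a" "x - a"] assms(3) by simp
  have h2: "a * v' (x - a) \<le> v x" by (rule MVTv[OF assms(1,2,3)])
  have h3: "a * y \<le> v (x - 2 * a)"
    using MVTv[OF assms(1,2,3), of "x - 2 * a"] by (simp add: y_def algebra_simps)
  have M0: "K \<le> Mv" using assms(5) by (simp add: Mv_def)
  have "a\<^sup>2 * K * y \<le> a * Mv * (a * y)"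
  proof -
    have "K * (a * (a * y)) \<le> Mv * (a * (a * y))"
      by (rule mult_right_mono[OF M0]) (use assms(3) y0 in simp)
    then show ?thesis by (simp add: power2_eq_square algebra_simps)
  qed
  also have "\<dots> \<le> a * Mv * v (x - 2 * a)"
    by (rule mult_left_mono[OF h3]) (use assms(3,4) M0 in simp)
  also have "\<dots> = a * (v (x - 2 * a) * Mv)" by simp
  also have "\<dots> \<le> a * v' (x - a)"
    by (rule mult_left_mono[OF h1]) (use assms(3) in simp)
  also have "\<dots> \<le> v x" by (rule h2)
  finally have c: "a\<^sup>2 * K * y \<le> v x" .
  have w: "(- u' x) * v x \<le> 1"
    using pf(7)[OF assms(2), of x] mult_pos_pos[OF pf(6)[OF assms(2), of x] pf(3)[OF assms(2), of x]] by (simp add: algebra_simps)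
  have "a\<^sup>2 * K * ((- u' x) * y) = (- u' x) * (a\<^sup>2 * K * y)" by simp
  also have "\<dots> \<le> (- u' x) * v x"
    by (rule mult_left_mono[OF c]) (use pf(5)[OF assms(2), of x] in simp)
  also have "\<dots> \<le> 1" by (rule w)
  finally have "a\<^sup>2 * K * ((- u' x) * y) \<le> 1" .
  moreover have "0 < a\<^sup>2 * K" using assms(3,4) by simp
  ultimately show ?thesis unfolding y_def by (simp add: pos_le_divide_eq mult.commute)
qed

lemma R_bound:
  assumes "potential q" "PFSS q u u' v v'" "a > 0" "K > 0"
    "K \<le> (LBINT r:{x + a..x + 2 * a}. q r)" "K \<le> (LBINT r:{x - 2 * a..x - a}. q r)"
  shows "(- u' x) * (3 * a * v x + v' (x - 3 * a)) + v' x * (3 * a * u x - u' (x + 3 * a))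
     \<le> 6 * a + 2 / (a\<^sup>2 * K)"
proof -
  have w1: "(- u' x) * v x \<le> 1"
    using pf(7)[OF assms(2), of x] mult_pos_pos[OF pf(6)[OF assms(2), of x] pf(3)[OF assms(2), of x]] by (simp add: algebra_simps)
  have w2: "v' x * u x \<le> 1"
    using pf(7)[OF assms(2), of x] mult_neg_pos[OF pf(5)[OF assms(2), of x] pf(4)[OF assms(2), of x]] by (simp add: algebra_simps)
  have a1: "(- u' x) * (3 * a * v x) \<le> 3 * a"
    using mult_left_mono[OF w1, of "3 * a"] assms(3) by (simp add: algebra_simps)
  have a2: "v' x * (3 * a * u x) \<le> 3 * a"
    using mult_left_mono[OF w2, of "3 * a"] assms(3) by (simp add: algebra_simps)
  note c1 = chain_u[OF assms(1-5)]
  note c2 = chain_v[OF assms(1-4,6)]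
  show ?thesis using a1 a2 c1 c2 by (simp add: algebra_simps)
qed



theorem lemma4p2:
  fixes q u u' v v' :: "real \<Rightarrow> real"
  assumes "potential q"
    and "PFSS q u u' v v'"
    and "\<forall>a::real>0. filterlim (\<lambda>x. LBINT t=ereal (x-a)..ereal (x+a). q t) at_top at_infinity"
  shows "((\<lambda>x. \<integral>\<^sup>+ t. ennreal \<bar>deriv (\<lambda>y. green u v y t) x\<bar> \<partial>lborel) \<longlongrightarrow> 0) at_infinity"
proof -
  define F where "F x = (\<integral>\<^sup>+ t. ennreal \<bar>deriv (\<lambda>y. green u v y t) x\<bar> \<partial>lborel)" for x
  have bound: "F x \<le> ennreal ((- u' x) * (3 * a * v x + v' (x - 3 * a)) + v' x * (3 * a * u x - u' (x + 3 * a)))"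
    if a: "a > 0" for x a
  proof -
    have p1: "0 \<le> 3 * a * v x + v' (x - 3 * a)" "0 \<le> 3 * a * u x - u' (x + 3 * a)"
      "0 \<le> - u' x" "0 \<le> v' x"
    proof -
      have "0 < v x" "0 < v' (x - 3 * a)" "0 < u x" "u' (x + 3 * a) < 0" "u' x < 0" "0 < v' x"
        using pf(3-6)[OF assms(2)] by auto
      moreover have "0 < 3 * a * v x" "0 < 3 * a * u x" using a calculation by simp_all
      ultimately show "0 \<le> 3 * a * v x + v' (x - 3 * a)" "0 \<le> 3 * a * u x - u' (x + 3 * a)"
        "0 \<le> - u' x" "0 \<le> v' x" by linarith+
    qed
    have "F x \<le> ennreal (- u' x) * (\<integral>\<^sup>+ t. ennreal (v t) * indicator {..x} t \<partial>lborel) +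
      ennreal (v' x) * (\<integral>\<^sup>+ t. ennreal (u t) * indicator {x..} t \<partial>lborel)"
      unfolding F_def by (rule split_bound[OF assms(2)])
    also have "\<dots> \<le> ennreal (- u' x) * ennreal (3 * a * v x + v' (x - 3 * a)) +
      ennreal (v' x) * ennreal (3 * a * u x - u' (x + 3 * a))"
      by (intro add_mono mult_left_mono v_part[OF assms(1,2) a] u_part[OF assms(1,2) a]) auto
    also have "\<dots> = ennreal ((- u' x) * (3 * a * v x + v' (x - 3 * a))) +
      ennreal (v' x * (3 * a * u x - u' (x + 3 * a)))"
    proof -
      have m1: "ennreal (- u' x) * ennreal (3 * a * v x + v' (x - 3 * a)) = ennreal ((- u' x) * (3 * a * v x + v' (x - 3 * a)))"
        by (rule ennreal_mult[symmetric]) (use p1 in auto)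
      have m2: "ennreal (v' x) * ennreal (3 * a * u x - u' (x + 3 * a)) = ennreal (v' x * (3 * a * u x - u' (x + 3 * a)))"
        by (rule ennreal_mult[symmetric]) (use p1 in auto)
      show ?thesis by (simp only: m1 m2)
    qed
    also have "\<dots> = ennreal ((- u' x) * (3 * a * v x + v' (x - 3 * a)) + v' x * (3 * a * u x - u' (x + 3 * a)))"
      using p1 by (intro ennreal_plus[symmetric] mult_nonneg_nonneg) auto
    finally show ?thesis .
  qed
  have ev: "eventually (\<lambda>x. F x \<le> ennreal \<epsilon>) at_infinity" if e: "\<epsilon> > 0" for \<epsilon>
  proof -
    define a where "a = \<epsilon> / 12"
    define K where "K = 4 / (a\<^sup>2 * \<epsilon>)"
    have a0: "a > 0" and K0: "K > 0" using e by (auto simp: a_def K_def)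
    have "filterlim (\<lambda>x. LBINT t=ereal (x - a/2)..ereal (x + a/2). q t) at_top at_infinity"
      using assms(3) a0 by simp
    then have "eventually (\<lambda>y. K \<le> (LBINT t=ereal (y - a/2)..ereal (y + a/2). q t)) at_infinity"
      by (simp add: filterlim_at_top)
    then obtain B where B: "\<And>y. B \<le> norm y \<Longrightarrow> K \<le> (LBINT t=ereal (y - a/2)..ereal (y + a/2). q t)"
      unfolding eventually_at_infinity by blast
    have B': "K \<le> (LBINT t:{y - a/2..y + a/2}. q t)" if "B \<le> \<bar>y\<bar>" for y
      using B[of y] that interval_integral_Icc[of "y - a/2" "y + a/2" q] a0 by simp
    have eq: "6 * a + 2 / (a\<^sup>2 * K) = \<epsilon>"
    proof -
      have "a\<^sup>2 * K = 4 / \<epsilon>" using a0 e unfolding K_def by (simp add: field_simps)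
      then have "2 / (a\<^sup>2 * K) = \<epsilon> / 2" using e by simp
      then show ?thesis unfolding a_def by simp
    qed
    show ?thesis
      unfolding eventually_at_infinity
    proof (intro exI[of _ "B + 2 * a"] allI impI)
      fix x :: real assume x: "B + 2 * a \<le> norm x"
      have Ku: "K \<le> (LBINT r:{x + a..x + 2 * a}. q r)"
      proof -
        have "K \<le> (LBINT t:{(x + 3 * a / 2) - a/2..(x + 3 * a / 2) + a/2}. q t)"
          by (rule B') (use x a0 in auto)
        moreover have "(x + 3 * a / 2) - a/2 = x + a" "(x + 3 * a / 2) + a/2 = x + 2 * a" by simp_all
        ultimately show ?thesis by simp
      qed
      have Kv: "K \<le> (LBINT r:{x - 2 * a..x - a}. q r)"
      proof -
        have "K \<le> (LBINT t:{(x - 3 * a / 2) - a/2..(x - 3 * a / 2) + a/2}. q t)"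
          by (rule B') (use x a0 in auto)
        moreover have "(x - 3 * a / 2) - a/2 = x - 2 * a" "(x - 3 * a / 2) + a/2 = x - a" by simp_all
        ultimately show ?thesis by simp
      qed
      have "F x \<le> ennreal ((- u' x) * (3 * a * v x + v' (x - 3 * a)) + v' x * (3 * a * u x - u' (x + 3 * a)))"
        by (rule bound[OF a0])
      also have "\<dots> \<le> ennreal (6 * a + 2 / (a\<^sup>2 * K))"
        by (rule ennreal_leI[OF R_bound[OF assms(1,2) a0 K0 Ku Kv]])
      finally show "F x \<le> ennreal \<epsilon>" using eq by simp
    qed
  qed
  have "(F \<longlongrightarrow> 0) at_infinity"
    unfolding order_tendsto_iff
  proof (intro conjI allI impI)
    fix l :: ennreal assume "l < 0" then show "eventually (\<lambda>x. l < F x) at_infinity" by simp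
  next
    fix e :: ennreal assume "0 < e"
    then obtain y where y: "0 < y" "y < e" using dense by blast
    then have yt: "y \<noteq> top" using top.not_eq_extremum by fastforce
    define \<epsilon> where "\<epsilon> = enn2real y"
    have e0: "\<epsilon> > 0" using y yt by (simp add: \<epsilon>_def enn2real_positive_iff top.not_eq_extremum)
    have ey: "ennreal \<epsilon> = y" using yt by (simp add: \<epsilon>_def ennreal_enn2real_if)
    show "eventually (\<lambda>x. F x < e) at_infinity"
      using ev[OF e0] by eventually_elim (use ey y in auto)
  qed
  then show ?thesis unfolding F_def .
qed


end
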